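(* In the static load balancing game described in the context, fix a player $i$ and the actions $a_{-i}$ of the other players. Suppose the servers are labeled so that $\hat{\mu}_{i1}\ge \hat{\mu}_{i2}\ge\cdots\ge\hat{\mu}_{im}$. Then the optimal solution of the convex program $$\min_{a_i}\ D_i(a)\quad\text{s.t.}\quad \sum_{j=1}^m a_{ij}=1,\ a_{ij}\ge 0\ \ \forall j\in[m]$$ is given by $$a_{ij}=\begin{cases}\dfrac{\mu_j}{\lambda_i}\left(\dfrac{\lambda_i+\sum_{k=1}^{c_i-1}\frac{\mu_k}{\hat{\mu}_{ik}}}{\sum_{k=1}^{c_i-1}\mu_k}-\dfrac{1}{\hat{\mu}_{ij}}\right), & 1\le j<c_i,\\[2mm] 0, & c_i\le j\le m,\end{cases}$$ where $c_i$ is the smallest integer index satisfying $$\hat{\mu}_{ic_i}\left(\lambda_i+\sum_{k=1}^{c_i-1}\frac{\mu_k}{\hat{\mu}_{ik}}\right)\le \sum_{k=1}^{c_i-1}\mu_k,$$ with $c_i=m+1$ if no index in $\{1,\dots,m\}$ satisfies this inequality.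
   Context: Static load balancing game: there are $m$ servers with service rates $\mu_j>0$ and initial loads $s_j^0\ge0$, and $n$ players; player $i$ holds a job of length $\lambda_i>0$. Player $i$'s action is $a_i=(a_{i1},\dots,a_{im})$ in the probability simplex, $a_{ij}$ being the fraction of job $i$ placed on server $j$. The cost of player $i$ under profile $a$ is $$D_i(a)=\sum_{j=1}^m \lambda_i a_{ij}\left(\frac{\lambda_i a_{ij}}{2\mu_j}+\frac{s_j^0+\sum_{k\neq i}\lambda_k a_{kj}}{\mu_j}\right).$$ The relative available processing rate of server $j$ as viewed by player $i$ is $\hat{\mu}_{ij}=\dfrac{\mu_j}{s_j^0+\sum_{k\ne i}\lambda_k a_{kj}}$ (taken to be $+\infty$ when the denominator is $0$, in which case $1/\hat{\mu}_{ij}=0$). *)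

theory Defs
  imports Complex_Main "HOL-Library.Extended_Real"
begin

(* Servers are indexed 1..m, players 1..n.
   lam k   : job length of player k
   mu j    : service rate of server j
   s0 j    : initial load of server j
   a k j   : fraction of job k placed on server j (a profile) *)

definition others_load ::
  "(nat \<Rightarrow> real) \<Rightarrow> (nat \<Rightarrow> real) \<Rightarrow> nat \<Rightarrow> nat \<Rightarrow> (nat \<Rightarrow> nat \<Rightarrow> real) \<Rightarrow> nat \<Rightarrow> real" where
  "others_load lam s0 n i a j = s0 j + (\<Sum>k\<in>{1..n} - {i}. lam k * a k j)"

definition cost ::
  "(nat \<Rightarrow> real) \<Rightarrow> (nat \<Rightarrow> real) \<Rightarrow> (nat \<Rightarrow> real) \<Rightarrow> nat \<Rightarrow> nat \<Rightarrow> nat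
   \<Rightarrow> (nat \<Rightarrow> nat \<Rightarrow> real) \<Rightarrow> real" where
  "cost lam mu s0 n m i a =
     (\<Sum>j=1..m. lam i * a i j * (lam i * a i j / (2 * mu j) + others_load lam s0 n i a j / mu j))"

definition mu_hat ::
  "(nat \<Rightarrow> real) \<Rightarrow> (nat \<Rightarrow> real) \<Rightarrow> (nat \<Rightarrow> real) \<Rightarrow> nat \<Rightarrow> nat
   \<Rightarrow> (nat \<Rightarrow> nat \<Rightarrow> real) \<Rightarrow> nat \<Rightarrow> ereal" where
  "mu_hat lam mu s0 n i a j =
     (if others_load lam s0 n i a j = 0 then \<infinity> else ereal (mu j / others_load lam s0 n i a j))"

definition inv_mu_hat ::
  "(nat \<Rightarrow> real) \<Rightarrow> (nat \<Rightarrow> real) \<Rightarrow> (nat \<Rightarrow> real) \<Rightarrow> nat \<Rightarrow> nat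
   \<Rightarrow> (nat \<Rightarrow> nat \<Rightarrow> real) \<Rightarrow> nat \<Rightarrow> real" where
  "inv_mu_hat lam mu s0 n i a j =
     (if others_load lam s0 n i a j = 0 then 0 else 1 / (mu j / others_load lam s0 n i a j))"

definition c_cond ::
  "(nat \<Rightarrow> real) \<Rightarrow> (nat \<Rightarrow> real) \<Rightarrow> (nat \<Rightarrow> real) \<Rightarrow> nat \<Rightarrow> nat
   \<Rightarrow> (nat \<Rightarrow> nat \<Rightarrow> real) \<Rightarrow> nat \<Rightarrow> bool" where
  "c_cond lam mu s0 n i a c \<longleftrightarrow>
     mu_hat lam mu s0 n i a c *
       ereal (lam i + (\<Sum>k=1..c-1. mu k * inv_mu_hat lam mu s0 n i a k))
     \<le> ereal (\<Sum>k=1..c-1. mu k)"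

definition c_idx ::
  "(nat \<Rightarrow> real) \<Rightarrow> (nat \<Rightarrow> real) \<Rightarrow> (nat \<Rightarrow> real) \<Rightarrow> nat \<Rightarrow> nat \<Rightarrow> nat
   \<Rightarrow> (nat \<Rightarrow> nat \<Rightarrow> real) \<Rightarrow> nat" where
  "c_idx lam mu s0 n m i a =
     (if \<exists>c\<in>{1..m}. c_cond lam mu s0 n i a c
      then (LEAST c. c \<in> {1..m} \<and> c_cond lam mu s0 n i a c)
      else m + 1)"

definition opt_action ::
  "(nat \<Rightarrow> real) \<Rightarrow> (nat \<Rightarrow> real) \<Rightarrow> (nat \<Rightarrow> real) \<Rightarrow> nat \<Rightarrow> nat \<Rightarrow> nat
   \<Rightarrow> (nat \<Rightarrow> nat \<Rightarrow> real) \<Rightarrow> nat \<Rightarrow> real" where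
  "opt_action lam mu s0 n m i a j =
     (let c = c_idx lam mu s0 n m i a in
      if 1 \<le> j \<and> j < c then
        mu j / lam i *
          ((lam i + (\<Sum>k=1..c-1. mu k * inv_mu_hat lam mu s0 n i a k)) / (\<Sum>k=1..c-1. mu k)
           - inv_mu_hat lam mu s0 n i a j)
      else 0)"

definition in_simplex :: "nat \<Rightarrow> (nat \<Rightarrow> real) \<Rightarrow> bool" where
  "in_simplex m x \<longleftrightarrow> (\<forall>j\<in>{1..m}. 0 \<le> x j) \<and> (\<Sum>j=1..m. x j) = 1"

end

theory Submission
  imports Defs
begin

lemma sum_last: "1 \<le> (d::nat) \<Longrightarrow> (\<Sum>k=1..d. f k) = (\<Sum>k=1..d-1. f k) + (f d::real)"
  by (cases d) (auto simp: sum.cl_ivl_Suc)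

theorem lemma1:
  fixes lam mu s0 :: "nat \<Rightarrow> real" and a :: "nat \<Rightarrow> nat \<Rightarrow> real" and n m i :: nat
  assumes "1 \<le> m"
    and "\<forall>j\<in>{1..m}. 0 < mu j"
    and "\<forall>j\<in>{1..m}. 0 \<le> s0 j"
    and "\<forall>k\<in>{1..n}. 0 < lam k"
    and "i \<in> {1..n}"
    and "\<forall>k\<in>{1..n} - {i}. in_simplex m (a k)"
    and "\<forall>j j'. 1 \<le> j \<and> j \<le> j' \<and> j' \<le> m \<longrightarrow>
           mu_hat lam mu s0 n i a j' \<le> mu_hat lam mu s0 n i a j"
  shows "in_simplex m (opt_action lam mu s0 n m i a)
    \<and> (\<forall>x. in_simplex m x \<longrightarrow>
           cost lam mu s0 n m i (a(i := opt_action lam mu s0 n m i a)) \<le> cost lam mu s0 n m i (a(i := x)))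
    \<and> (\<forall>x. in_simplex m x \<and>
           cost lam mu s0 n m i (a(i := x)) \<le> cost lam mu s0 n m i (a(i := opt_action lam mu s0 n m i a))
           \<longrightarrow> (\<forall>j\<in>{1..m}. x j = opt_action lam mu s0 n m i a j))"
proof -
  note mupos = assms(2)
  define L where "L j = others_load lam s0 n i a j" for j
  define u where "u j = inv_mu_hat lam mu s0 n i a j" for j
  define c where "c = c_idx lam mu s0 n m i a"
  define S where "S = (\<Sum>k=1..c-1. mu k)"
  define P where "P = (\<Sum>k=1..c-1. mu k * u k)"
  define t where "t = (lam i + P) / S"
  define y where "y = opt_action lam mu s0 n m i a"
  have lampos: "0 < lam i" using assms(4,5) by blast
  have Lnn: "0 \<le> L j" if "j \<in> {1..m}" for j
  proof -
    have "0 \<le> lam k * a k j" if "k \<in> {1..n} - {i}" for k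
      using assms(4,6) that \<open>j \<in> {1..m}\<close> unfolding in_simplex_def
      by (meson DiffD1 less_le mult_nonneg_nonneg)
    then have "0 \<le> (\<Sum>k\<in>{1..n} - {i}. lam k * a k j)" by (rule sum_nonneg)
    then show ?thesis using assms(3) that unfolding L_def others_load_def by simp
  qed
  have ueq: "u j = L j / mu j" if "j \<in> {1..m}" for j
    using mupos that unfolding u_def inv_mu_hat_def L_def by auto
  have unn: "0 \<le> u j" if "j \<in> {1..m}" for j
  proof -
    have "0 < mu j" using mupos that by blast
    then show ?thesis using ueq[OF that] Lnn[OF that] by simp
  qed
  have umono: "u j \<le> u j'" if "1 \<le> j" "j \<le> j'" "j' \<le> m" for j j'
  proof (cases "L j = 0")
    case True
    then show ?thesis using ueq unn that by simp
  next
    case False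
    have mh: "mu_hat lam mu s0 n i a j' \<le> mu_hat lam mu s0 n i a j" using assms(7) that by blast
    have Lj: "0 < L j" using False Lnn that by force
    have "L j' \<noteq> 0"
    proof
      assume "L j' = 0"
      then have "mu_hat lam mu s0 n i a j' = \<infinity>" unfolding mu_hat_def L_def by simp
      moreover have "mu_hat lam mu s0 n i a j = ereal (mu j / L j)" using False unfolding mu_hat_def L_def by simp
      ultimately show False using mh by simp
    qed
    then have Lj': "0 < L j'" using Lnn[of j'] that by fastforce
    have "mu j' / L j' \<le> mu j / L j" using mh False \<open>L j' \<noteq> 0\<close> unfolding mu_hat_def L_def by simp
    moreover have "0 < mu j" "0 < mu j'" using mupos that by auto
    ultimately have "L j / mu j \<le> L j' / mu j'" using Lj Lj'
      by (simp add: field_simps)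
    then show ?thesis using ueq that by simp
  qed
  have Pnn: "0 \<le> (\<Sum>k=1..c'-1. mu k * u k)" if "c' \<le> m + 1" for c'
  proof (rule sum_nonneg)
    fix k assume "k \<in> {1..c'-1}"
    then have k: "k \<in> {1..m}" using that by auto
    then have "0 < mu k" using mupos by blast
    then show "0 \<le> mu k * u k" using unn[OF k] by simp
  qed
  have not1: "\<not> c_cond lam mu s0 n i a 1"
  proof
    assume h: "c_cond lam mu s0 n i a 1"
    have "mu_hat lam mu s0 n i a 1 * ereal (lam i) \<le> 0" using h unfolding c_cond_def by (simp add: zero_ereal_def)
    moreover have "0 < mu_hat lam mu s0 n i a 1 * ereal (lam i)"
    proof (cases "L 1 = 0")
      case True
      then show ?thesis using lampos unfolding mu_hat_def L_def by simp
    next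
      case False
      then have "0 < L 1" using Lnn assms(1) by force
      moreover have "0 < mu 1" using mupos assms(1) by auto
      ultimately show ?thesis using False lampos unfolding mu_hat_def L_def by simp
    qed
    ultimately show False by simp
  qed
  have cprops: "2 \<le> c \<and> c \<le> m + 1 \<and> (c \<le> m \<longrightarrow> c_cond lam mu s0 n i a c)
      \<and> (\<forall>c'. 1 \<le> c' \<and> c' < c \<longrightarrow> \<not> c_cond lam mu s0 n i a c')"
  proof (cases "\<exists>c\<in>{1..m}. c_cond lam mu s0 n i a c")
    case True
    then have ceq: "c = (LEAST c. c \<in> {1..m} \<and> c_cond lam mu s0 n i a c)"
      unfolding c_def c_idx_def by simp
    from True obtain c0 where c0: "c0 \<in> {1..m} \<and> c_cond lam mu s0 n i a c0" by blast
    have Q: "c \<in> {1..m} \<and> c_cond lam mu s0 n i a c" unfolding ceq by (rule LeastI[of _ c0], rule c0)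
    have mn: "\<not> c_cond lam mu s0 n i a c'" if "1 \<le> c'" "c' < c" for c'
    proof
      assume "c_cond lam mu s0 n i a c'"
      then have "c' \<in> {1..m} \<and> c_cond lam mu s0 n i a c'" using that Q by auto
      then have "c \<le> c'" unfolding ceq by (rule Least_le)
      then show False using that by simp
    qed
    have "c \<noteq> 1" using Q not1 by auto
    then show ?thesis using Q mn by auto
  next
    case False
    then have "c = m + 1" unfolding c_def c_idx_def by simp
    then show ?thesis using False assms(1) by auto
  qed
  have c2: "2 \<le> c" and cm: "c \<le> m + 1" using cprops by auto
  have Spos: "0 < S" unfolding S_def
    by (rule sum_pos) (use c2 cm mupos in auto)
  have yeq: "y j = (if 1 \<le> j \<and> j < c then mu j / lam i * (t - u j) else 0)" for j
    unfolding y_def opt_action_def Let_def c_def[symmetric] t_def P_def S_def u_def by simp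
  have tnn: "0 \<le> t" unfolding t_def using Spos lampos Pnn[OF cm] P_def by simp
  have tge: "u (c-1) \<le> t"
  proof -
    define d where "d = c - 1"
    have d1: "1 \<le> d" and dm: "d \<le> m" using c2 cm unfolding d_def by auto
    have cd: "c - 1 = d" unfolding d_def by simp
    define S' where "S' = (\<Sum>k=1..d-1. mu k)"
    define P' where "P' = (\<Sum>k=1..d-1. mu k * u k)"
    have SS: "S = S' + mu d" unfolding S_def S'_def cd using d1 by (rule sum_last)
    have PP: "P = P' + mu d * u d" unfolding P_def P'_def cd using d1 by (rule sum_last)
    have S'nn: "0 \<le> S'" unfolding S'_def using mupos dm by (intro sum_nonneg less_imp_le) auto
    have P'nn: "0 \<le> P'" unfolding P'_def using Pnn[of d] dm by simp
    have mud: "0 < mu d" using mupos d1 dm by auto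
    have key: "S' * u d \<le> lam i + P'"
    proof (cases "d = 1")
      case True
      then have "S' = 0" "P' = 0" unfolding S'_def P'_def by auto
      then show ?thesis using lampos by simp
    next
      case False
      then have nc: "\<not> c_cond lam mu s0 n i a d" using cprops d1 unfolding d_def by auto
      show ?thesis
      proof (cases "L d = 0")
        case True
        then show ?thesis using ueq[of d] d1 dm lampos P'nn by simp
      next
        case Lne: False
        then have Ld: "0 < L d" using Lnn[of d] d1 dm by simp
        have "ereal (mu d / L d) * ereal (lam i + P') > ereal S'"
          using nc Lne unfolding c_cond_def mu_hat_def L_def S'_def P'_def u_def by simp
        then have "mu d / L d * (lam i + P') > S'" by simp
        then have "mu d * (lam i + P') > S' * L d" using Ld by (simp add: field_simps)
        moreover have "S' * u d = S' * L d / mu d" using ueq[of d] d1 dm by simp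
        ultimately show ?thesis using mud by (simp add: pos_divide_le_eq algebra_simps)
      qed
    qed
    have "u d * S \<le> lam i + P" using key SS PP by (simp add: algebra_simps)
    then show ?thesis using Spos unfolding t_def cd by (simp add: field_simps)
  qed
  have tle: "t \<le> u c" if "c \<le> m"
  proof -
    have cc: "c_cond lam mu s0 n i a c" using cprops that by auto
    have pos: "0 < lam i + P" using lampos Pnn[OF cm] P_def by simp
    have "L c \<noteq> 0"
    proof
      assume "L c = 0"
      then have "mu_hat lam mu s0 n i a c = \<infinity>" unfolding mu_hat_def L_def by simp
      then show False using cc pos unfolding c_cond_def P_def[symmetric] u_def[symmetric] by simp
    qed
    then have Lc: "0 < L c" using Lnn[of c] c2 that by simp
    have muc: "0 < mu c" using mupos c2 that by auto
    have "ereal (mu c / L c) * ereal (lam i + P) \<le> ereal S"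
      using cc \<open>L c \<noteq> 0\<close> unfolding c_cond_def mu_hat_def L_def S_def P_def u_def by simp
    then have "mu c / L c * (lam i + P) \<le> S" by simp
    then have "mu c * (lam i + P) \<le> S * L c" using Lc by (simp add: field_simps)
    moreover have "S * u c = S * L c / mu c" using ueq[of c] c2 that by simp
    ultimately have "lam i + P \<le> S * u c" using muc by (simp add: le_divide_eq algebra_simps)
    then show ?thesis using Spos unfolding t_def by (simp add: divide_le_eq mult.commute)
  qed
  have tgeu: "u j \<le> t" if "1 \<le> j" "j < c" for j
  proof -
    have "j \<le> c - 1" "c - 1 \<le> m" using that cm by auto
    then show ?thesis using umono[of j "c-1"] that tge by linarith
  qed
  have tleu: "t \<le> u j" if "c \<le> j" "j \<le> m" for j
    using umono[of c j] that tle c2 by auto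
  have ynn: "0 \<le> y j" for j
  proof (cases "1 \<le> j \<and> j < c")
    case True
    then have "0 < mu j" using mupos cm by auto
    then show ?thesis using True yeq[of j] tgeu[of j] lampos by simp
  next
    case False
    have "y j = 0" using False by (simp only: yeq if_False)
    then show ?thesis by simp
  qed
  have ysum: "(\<Sum>j=1..m. y j) = 1"
  proof -
    have "(\<Sum>j=1..c-1. y j) = (\<Sum>j=1..m. y j)"
    proof (rule sum.mono_neutral_left)
      show "{1..c-1} \<subseteq> {1..m}" using cm by auto
      show "\<forall>j\<in>{1..m} - {1..c-1}. y j = 0"
      proof
        fix j assume "j \<in> {1..m} - {1..c-1}"
        then have "\<not> (1 \<le> j \<and> j < c)" by auto
        then show "y j = 0" by (simp only: yeq if_False)
      qed
    qed simp
    then have "(\<Sum>j=1..m. y j) = (\<Sum>j=1..c-1. y j)" by simp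
    also have "(\<Sum>j=1..c-1. y j) = (\<Sum>j=1..c-1. (t * mu j - mu j * u j) / lam i)"
      using yeq c2 by (intro sum.cong) (auto simp: field_simps)
    also have "\<dots> = (t * S - P) / lam i"
      unfolding S_def P_def sum_divide_distrib[symmetric] sum_subtractf sum_distrib_left ..
    also have "\<dots> = 1" using Spos lampos unfolding t_def by (simp add: field_simps)
    finally show ?thesis by simp
  qed
  have simp_y: "in_simplex m y" unfolding in_simplex_def using ynn ysum by simp
  have costeq: "cost lam mu s0 n m i (a(i := x)) =
      (\<Sum>j=1..m. lam i * x j * (lam i * x j / (2 * mu j) + L j / mu j))" for x
  proof -
    have "others_load lam s0 n i (a(i := x)) j = L j" for j
      unfolding others_load_def L_def by (intro arg_cong[where f="\<lambda>z. s0 j + z"] sum.cong) auto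
    then show ?thesis unfolding cost_def by simp
  qed
  define g where "g j = lam i * y j / mu j + u j" for j
  have diff: "cost lam mu s0 n m i (a(i := x)) - cost lam mu s0 n m i (a(i := y))
     = (\<Sum>j=1..m. lam i ^ 2 * (x j - y j) ^ 2 / (2 * mu j)) + lam i * (\<Sum>j=1..m. (x j - y j) * g j)" for x
  proof -
    have "cost lam mu s0 n m i (a(i := x)) - cost lam mu s0 n m i (a(i := y))
      = (\<Sum>j=1..m. lam i ^ 2 * (x j - y j) ^ 2 / (2 * mu j) + lam i * ((x j - y j) * g j))"
      unfolding costeq sum_subtractf[symmetric]
    proof (intro sum.cong refl)
      fix j assume j: "j \<in> {1..m}"
      then have "mu j \<noteq> 0" using mupos by force
      then show "lam i * x j * (lam i * x j / (2 * mu j) + L j / mu j) -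
          lam i * y j * (lam i * y j / (2 * mu j) + L j / mu j) =
          lam i ^ 2 * (x j - y j) ^ 2 / (2 * mu j) + lam i * ((x j - y j) * g j)"
        unfolding g_def ueq[OF j] by (simp add: field_simps power2_eq_square)
    qed
    then show ?thesis by (simp add: sum.distrib sum_distrib_left)
  qed
  have gterm: "(\<Sum>j=1..m. (x j - y j) * g j) \<ge> 0" if x: "in_simplex m x" for x
  proof -
    have "(\<Sum>j=1..m. (x j - y j) * t) \<le> (\<Sum>j=1..m. (x j - y j) * g j)"
    proof (rule sum_mono)
      fix j assume j: "j \<in> {1..m}"
      show "(x j - y j) * t \<le> (x j - y j) * g j"
      proof (cases "j < c")
        case True
        have "0 < mu j" using j mupos by auto
        then have "g j = t" unfolding g_def yeq using j True lampos by (simp add: field_simps)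
        then show ?thesis by simp
      next
        case False
        then have "y j = 0" using yeq by simp
        moreover have "0 \<le> x j" using x j unfolding in_simplex_def by auto
        moreover have "t \<le> g j" unfolding g_def using \<open>y j = 0\<close> tleu[of j] False j by auto
        ultimately show ?thesis by (simp add: mult_left_mono)
      qed
    qed
    moreover have "(\<Sum>j=1..m. (x j - y j) * t) = 0"
      using x ysum unfolding in_simplex_def sum_distrib_right[symmetric] sum_subtractf by simp
    ultimately show ?thesis by simp
  qed
  have qnn: "0 \<le> (\<Sum>j=1..m. lam i ^ 2 * (x j - y j) ^ 2 / (2 * mu j))" for x
    using mupos by (intro sum_nonneg divide_nonneg_pos) auto
  show ?thesis
    unfolding y_def[symmetric]
  proof (intro conjI allI impI simp_y)
    fix x assume "in_simplex m x"
    then show "cost lam mu s0 n m i (a(i := y)) \<le> cost lam mu s0 n m i (a(i := x))"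
      using diff[of x] gterm[of x] qnn[of x] lampos
      by (smt (verit) mult_nonneg_nonneg)
  next
    fix x assume h: "in_simplex m x \<and> cost lam mu s0 n m i (a(i := x)) \<le> cost lam mu s0 n m i (a(i := y))"
    then have "(\<Sum>j=1..m. lam i ^ 2 * (x j - y j) ^ 2 / (2 * mu j)) \<le> 0"
      using diff[of x] gterm[of x] lampos by (smt (verit) mult_nonneg_nonneg)
    then have z: "(\<Sum>j=1..m. lam i ^ 2 * (x j - y j) ^ 2 / (2 * mu j)) = 0" using qnn[of x] by simp
    have "\<forall>j\<in>{1..m}. lam i ^ 2 * (x j - y j) ^ 2 / (2 * mu j) = 0"
    proof -
      have "\<forall>j\<in>{1..m}. 0 \<le> lam i ^ 2 * (x j - y j) ^ 2 / (2 * mu j)"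
        using mupos by (auto intro!: divide_nonneg_pos)
      then show ?thesis using iffD1[OF sum_nonneg_eq_0_iff z] by blast
    qed
    then show "\<forall>j\<in>{1..m}. x j = y j" using mupos lampos by fastforce
  qed
qed

end
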